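(* Let $(p^*,q^*,\omega^*,\tilde\theta^*,\alpha^*,\lambda^*,\eta^*,\nu^* )$ be an optimal primal-dual solution of the planner's problem \[ \min_{p,q,\omega\in\mathbb{R}^n,\ \tilde\theta\in\mathbb{R}^{|\mathcal E|}}\ \sum_{j=1}^n J_j(p_j)+\tfrac12\omega^TD\omega \] subject to $q=p$ (multiplier $\alpha\in\mathbb{R}^n$), $\mathbf 1^T(q-d)=0$ (multiplier $\lambda\in\mathbb{R}$), $H^T(q-d)\le F$ (multiplier $\eta\in\mathbb{R}^{2|\mathcal E|}_{\ge0}$), and $q-d-D\omega-CB\tilde\theta=0$ (multiplier $\nu\in\mathbb{R}^n$). Then $q^*-d-D\omega^*-CB\tilde\theta^*=0$, $\omega^*=0$, $q^*$ is an optimal solution of $\min_q \sum_j J_j(q_j)$ s.t. $\mathbf 1^T(q-d)=0$, $H^T(q-d)\le F$, and $\nabla J(p^* )=\lambda^*\mathbf 1-H\eta^*$, where $\nabla J(p):=(J_j'(p_j))_{j=1}^n$.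
   Context: $(\mathcal N,\mathcal E)$ is a connected directed graph with $\mathcal N=\{1,\dots,n\}$; $C\in\mathbb{R}^{n\times|\mathcal E|}$ is its incidence matrix ($C_{j,e}=1$ if $e=(j,k)$, $-1$ if $e=(k,j)$, $0$ otherwise). $B$ ($|\mathcal E|\times|\mathcal E|$) and $D$ ($n\times n$) are diagonal with positive diagonal entries. $L:=CBC^T$, $L^\dagger$ its Moore–Penrose inverse, $H\in\mathbb{R}^{n\times2|\mathcal E|}$ with $H^T=\begin{bmatrix} BC^TL^\dagger\\ -BC^TL^\dagger\end{bmatrix}$, $F=\begin{bmatrix}\overline F\\-\underline F\end{bmatrix}$ for given limits $\underline F,\overline F$. $d\in\mathbb{R}^n$ is given; each $J_j$ is strictly convex and twice differentiable. The Lagrangian used to define the multipliers is $\sum_jJ_j(p_j)+\tfrac12\omega^TD\omega+\nu^T(q-d-D\omega-CB\tilde\theta)+\alpha^T(q-p)-\lambda\mathbf 1^T(q-d)+\eta^T(H^T(q-d)-F)$. *)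

theory Defs
  imports "HOL-Analysis.Analysis"
begin

definition strict_convex_on :: "real set \<Rightarrow> (real \<Rightarrow> real) \<Rightarrow> bool" where
  "strict_convex_on S f \<longleftrightarrow>
     (\<forall>x\<in>S. \<forall>y\<in>S. x \<noteq> y \<longrightarrow> (\<forall>t. 0 < t \<and> t < 1 \<longrightarrow>
        f ((1 - t) * x + t * y) < (1 - t) * f x + t * f y))"

definition pos_diag :: "real^'a^'a \<Rightarrow> bool" where
  "pos_diag M \<longleftrightarrow> (\<forall>i j. i \<noteq> j \<longrightarrow> M$i$j = 0) \<and> (\<forall>i. M$i$i > 0)"

definition pinv :: "real^'a^'a \<Rightarrow> real^'a^'a" where
  "pinv A = (THE X. A ** X ** A = A \<and> X ** A ** X = X \<and>
                    transpose (A ** X) = A ** X \<and> transpose (X ** A) = X ** A)"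

(* Directed graph: edges of type 'e, edge e = (src e, tgt e) *)
definition incidence :: "('e \<Rightarrow> 'n) \<Rightarrow> ('e \<Rightarrow> 'n) \<Rightarrow> real^'e^'n" where
  "incidence src tgt = (\<chi> j e. (if src e = j then 1 else 0) - (if tgt e = j then 1 else 0))"

definition graph_connected :: "('e \<Rightarrow> 'n) \<Rightarrow> ('e \<Rightarrow> 'n) \<Rightarrow> bool" where
  "graph_connected src tgt \<longleftrightarrow>
     (\<forall>j k. (j, k) \<in> ({(src e, tgt e) | e. True} \<union> {(tgt e, src e) | e. True})\<^sup>*)"

definition laplacian :: "real^'e^'n \<Rightarrow> real^'e^'e \<Rightarrow> real^'n^'n" where
  "laplacian C B = C ** B ** transpose C"

(* H^T = [B C^T L^dagger ; - B C^T L^dagger], rows indexed by 'e + 'e *)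
definition HT :: "real^'e^'n \<Rightarrow> real^'e^'e \<Rightarrow> real^'n^('e + 'e)" where
  "HT C B = (let M = B ** transpose C ** pinv (laplacian C B) in
             (\<chi> r. case r of Inl e \<Rightarrow> M$e | Inr e \<Rightarrow> - (M$e)))"

definition Hmat :: "real^'e^'n \<Rightarrow> real^'e^'e \<Rightarrow> real^('e + 'e)^'n" where
  "Hmat C B = transpose (HT C B)"

(* F = [Fbar ; - Funder] *)
definition Fvec :: "real^'e \<Rightarrow> real^'e \<Rightarrow> real^('e + 'e)" where
  "Fvec Fup Flo = (\<chi> r. case r of Inl e \<Rightarrow> Fup$e | Inr e \<Rightarrow> - (Flo$e))"

definition one_vec :: "real^'n" where "one_vec = (\<chi> j. 1)"

definition Jsum :: "('n \<Rightarrow> real \<Rightarrow> real) \<Rightarrow> real^'n \<Rightarrow> real" where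
  "Jsum J p = (\<Sum>j\<in>UNIV. J j (p$j))"

definition gradJ :: "('n \<Rightarrow> real \<Rightarrow> real) \<Rightarrow> real^'n \<Rightarrow> real^'n" where
  "gradJ J p = (\<chi> j. deriv (J j) (p$j))"

definition planner_obj :: "('n \<Rightarrow> real \<Rightarrow> real) \<Rightarrow> real^'n^'n \<Rightarrow> real^'n \<Rightarrow> real^'n \<Rightarrow> real" where
  "planner_obj J D p \<omega> = Jsum J p + (1/2) * (\<omega> \<bullet> (D *v \<omega>))"

definition lagrangian ::
  "('n \<Rightarrow> real \<Rightarrow> real) \<Rightarrow> real^'e^'n \<Rightarrow> real^'e^'e \<Rightarrow> real^'n^'n \<Rightarrow> real^'n \<Rightarrow> real^('e+'e) \<Rightarrow>
   real^'n \<Rightarrow> real^'n \<Rightarrow> real^'n \<Rightarrow> real^'e \<Rightarrow>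
   real^'n \<Rightarrow> real \<Rightarrow> real^('e+'e) \<Rightarrow> real^'n \<Rightarrow> real" where
  "lagrangian J C B D d F p q \<omega> \<theta> \<alpha> lam \<eta> \<nu> =
     planner_obj J D p \<omega>
     + \<nu> \<bullet> (q - d - D *v \<omega> - (C ** B) *v \<theta>)
     + \<alpha> \<bullet> (q - p)
     - lam * (one_vec \<bullet> (q - d))
     + \<eta> \<bullet> (HT C B *v (q - d) - F)"

(* Optimal primal-dual solution = saddle point of the Lagrangian over
   all primal variables and all multipliers with \<eta> \<ge> 0 *)
definition planner_opt_pd where
  "planner_opt_pd J C B D d F p q \<omega> \<theta> \<alpha> lam \<eta> \<nu> \<longleftrightarrow>
     (\<forall>i. \<eta>$i \<ge> 0) \<and>
     (\<forall>\<alpha>' lam' \<eta>' \<nu>'. (\<forall>i. \<eta>'$i \<ge> 0) \<longrightarrow>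
        lagrangian J C B D d F p q \<omega> \<theta> \<alpha>' lam' \<eta>' \<nu>' \<le>
        lagrangian J C B D d F p q \<omega> \<theta> \<alpha> lam \<eta> \<nu>) \<and>
     (\<forall>p' q' \<omega>' \<theta>'.
        lagrangian J C B D d F p q \<omega> \<theta> \<alpha> lam \<eta> \<nu> \<le>
        lagrangian J C B D d F p' q' \<omega>' \<theta>' \<alpha> lam \<eta> \<nu>)"

definition reduced_feasible where
  "reduced_feasible C B d F q \<longleftrightarrow>
     one_vec \<bullet> (q - d) = 0 \<and> (\<forall>i. (HT C B *v (q - d))$i \<le> F$i)"

definition reduced_optimal where
  "reduced_optimal J C B d F q \<longleftrightarrow> reduced_feasible C B d F q \<and>
     (\<forall>q'. reduced_feasible C B d F q' \<longrightarrow> Jsum J q \<le> Jsum J q')"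

end

theory Submission
  imports Defs
begin

lemma diag_mv: "pos_diag D \<Longrightarrow> (D *v x) $ i = D$i$i * x$i"
proof -
  assume a: "pos_diag D"
  have "(D *v x) $ i = (\<Sum>j\<in>UNIV. D$i$j * x$j)" by (simp add: matrix_vector_mult_def)
  also have "\<dots> = (\<Sum>j\<in>UNIV. if j = i then D$i$i * x$i else 0)"
    by (rule sum.cong) (use a in \<open>auto simp: pos_diag_def\<close>)
  finally show ?thesis by simp
qed

lemma diag_quad: "pos_diag D \<Longrightarrow> y \<bullet> (D *v x) = (\<Sum>i\<in>UNIV. y$i * (D$i$i * x$i))"
  by (simp add: inner_vec_def diag_mv)

lemma diag_zero: assumes "pos_diag D" "x \<bullet> (D *v x) \<le> 0" shows "x = 0"
proof -
  have pos: "\<And>i. D$i$i > 0" using assms(1) unfolding pos_diag_def by auto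
  have eq: "x$i * (D$i$i * x$i) = D$i$i * (x$i)^2" for i
    by (simp add: power2_eq_square algebra_simps)
  have nn: "x$i * (D$i$i * x$i) \<ge> 0" for i
    unfolding eq using pos[of i] by simp
  have "(\<Sum>i\<in>UNIV. x$i * (D$i$i * x$i)) \<le> 0"
    using assms(2) unfolding diag_quad[OF assms(1)] .
  moreover have "(\<Sum>i\<in>UNIV. x$i * (D$i$i * x$i)) \<ge> 0"
    by (rule sum_nonneg) (rule nn)
  ultimately have "(\<Sum>i\<in>UNIV. x$i * (D$i$i * x$i)) = 0" by linarith
  then have "x$i * (D$i$i * x$i) = 0" for i using nn by (simp add: sum_nonneg_eq_0_iff)
  then have "x$i = 0" for i using pos[of i] unfolding eq by (metis less_irrefl mult_eq_0_iff power_eq_0_iff)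
  then show ?thesis by (simp add: vec_eq_iff)
qed

lemma inner_self_le0: "(x::real^'n) \<bullet> x \<le> 0 \<Longrightarrow> x = 0"
  using inner_ge_zero[of x] inner_eq_zero_iff[of x] by linarith

theorem corollary1:
  fixes src tgt :: "'e::finite \<Rightarrow> 'n::finite"
    and B :: "real^'e^'e" and D :: "real^'n^'n"
    and J :: "'n \<Rightarrow> real \<Rightarrow> real"
    and d :: "real^'n" and Fup Flo :: "real^'e"
    and p q \<omega> \<alpha> \<nu> :: "real^'n" and \<theta> :: "real^'e"
    and lam :: real and \<eta> :: "real^('e + 'e)"
  assumes simple: "inj (\<lambda>e. (src e, tgt e))"
    and conn: "graph_connected src tgt"
    and B_diag: "pos_diag B" and D_diag: "pos_diag D"
    and J_sc: "\<And>j. strict_convex_on UNIV (J j)"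
    and J_d1: "\<And>j x. J j differentiable (at x)"
    and J_d2: "\<And>j x. deriv (J j) differentiable (at x)"
    and opt: "planner_opt_pd J (incidence src tgt) B D d (Fvec Fup Flo) p q \<omega> \<theta> \<alpha> lam \<eta> \<nu>"
  shows "q - d - D *v \<omega> - (incidence src tgt ** B) *v \<theta> = 0
         \<and> \<omega> = 0
         \<and> reduced_optimal J (incidence src tgt) B d (Fvec Fup Flo) q
         \<and> gradJ J p = lam *\<^sub>R one_vec - Hmat (incidence src tgt) B *v \<eta>"
proof -
  define C where "C = incidence src tgt"
  define HTm where "HTm = HT C B"
  define F where "F = Fvec Fup Flo"
  define L where "L = lagrangian J C B D d F"
  have eta0: "\<forall>i. \<eta>$i \<ge> 0" and
    up: "\<And>\<alpha>' lam' \<eta>' \<nu>'. (\<forall>i. \<eta>'$i \<ge> 0) \<Longrightarrow> L p q \<omega> \<theta> \<alpha>' lam' \<eta>' \<nu>' \<le> L p q \<omega> \<theta> \<alpha> lam \<eta> \<nu>"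
   and low: "\<And>p' q' \<omega>' \<theta>'. L p q \<omega> \<theta> \<alpha> lam \<eta> \<nu> \<le> L p' q' \<omega>' \<theta>' \<alpha> lam \<eta> \<nu>"
    using opt unfolding planner_opt_pd_def L_def C_def F_def by auto
  have Lexp: "\<And>p q \<omega> \<theta> \<alpha> lam \<eta> \<nu>. L p q \<omega> \<theta> \<alpha> lam \<eta> \<nu> = Jsum J p + (1/2) * (\<omega> \<bullet> (D *v \<omega>)) + \<nu> \<bullet> (q - d - D *v \<omega> - (C ** B) *v \<theta>) + \<alpha> \<bullet> (q - p) - lam * (one_vec \<bullet> (q - d)) + \<eta> \<bullet> (HTm *v (q - d) - F)"
    unfolding L_def lagrangian_def planner_obj_def HTm_def by simp
  define g where "g = q - d - D *v \<omega> - (C ** B) *v \<theta>"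
  define h where "h = HTm *v (q - d) - F"
  define s where "s = one_vec \<bullet> (q - d)"
  have "g \<bullet> g \<le> 0" using up[of \<eta> \<alpha> lam "\<nu>+g"] eta0
    unfolding Lexp g_def[symmetric] by (simp add: inner_add_left)
  then have g0: "g = 0" by (rule inner_self_le0)
  have "(q-p) \<bullet> (q-p) \<le> 0" using up[of \<eta> "\<alpha> + (q-p)" lam \<nu>] eta0
    unfolding Lexp by (simp add: inner_add_left)
  then have "q - p = 0" by (rule inner_self_le0)
  then have qp: "q = p" by simp
  have "s * s \<le> 0" using up[of \<eta> \<alpha> "lam - s" \<nu>] eta0
    unfolding Lexp s_def[symmetric] by (simp add: algebra_simps)
  then have s0: "s = 0" by (metis mult_eq_0_iff antisym zero_le_square)
  have hle: "h$i \<le> 0" for i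
  proof -
    have "\<forall>k. (\<eta> + axis i 1)$k \<ge> 0" using eta0 by (simp add: axis_def)
    then have "(\<eta> + axis i 1) \<bullet> h \<le> \<eta> \<bullet> h" using up[of "\<eta> + axis i 1" \<alpha> lam \<nu>]
      unfolding Lexp h_def[symmetric] by simp
    then show ?thesis by (simp add: inner_add_left inner_axis')
  qed
  have "0 \<le> \<eta> \<bullet> h" using up[of 0 \<alpha> lam \<nu>] unfolding Lexp h_def[symmetric] by simp
  moreover have "\<eta> \<bullet> h \<le> 0" unfolding inner_vec_def
    using eta0 hle by (simp add: sum_nonpos mult_nonneg_nonpos)
  ultimately have cs: "\<eta> \<bullet> h = 0" by simp

  define w where "w = \<nu> v* (C ** B)"
  have "L p q \<omega> \<theta> \<alpha> lam \<eta> \<nu> \<le> L p q \<omega> (\<theta> + w) \<alpha> lam \<eta> \<nu>" by (rule low)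
  then have "w \<bullet> w \<le> 0" unfolding Lexp
    by (simp add: matrix_vector_right_distrib inner_add_right inner_diff_right dot_lmul_matrix[symmetric] w_def[symmetric])
  then have w0: "w = 0" by (rule inner_self_le0)
  have CB: "(C ** B)$j$e = C$j$e * B$e$e" for j e
  proof -
    have "(C ** B)$j$e = (\<Sum>k\<in>UNIV. C$j$k * B$k$e)" by (simp add: matrix_matrix_mult_def)
    also have "\<dots> = (\<Sum>k\<in>UNIV. if k = e then C$j$e * B$e$e else 0)"
      by (rule sum.cong) (use B_diag in \<open>auto simp: pos_diag_def\<close>)
    finally show ?thesis by simp
  qed
  have we: "w$e = B$e$e * (\<nu>$(src e) - \<nu>$(tgt e))" for e
  proof -
    have "w$e = (\<Sum>j\<in>UNIV. \<nu>$j * (C$j$e * B$e$e))"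
      by (simp add: w_def vector_matrix_mult_def CB)
    also have "\<dots> = (\<Sum>j\<in>UNIV. B$e$e * ((if src e = j then \<nu>$j else 0) - (if tgt e = j then \<nu>$j else 0)))"
      by (rule sum.cong) (auto simp: C_def incidence_def)
    also have "\<dots> = B$e$e * (\<Sum>j\<in>UNIV. (if src e = j then \<nu>$j else 0) - (if tgt e = j then \<nu>$j else 0))"
      by (simp add: sum_distrib_left)
    also have "\<dots> = B$e$e * (\<nu>$(src e) - \<nu>$(tgt e))"
      by (simp add: sum_subtractf)
    finally show ?thesis .
  qed
  have edge: "\<nu>$(src e) = \<nu>$(tgt e)" for e
  proof -
    have "B$e$e > 0" using B_diag unfolding pos_diag_def by auto
    moreover have "B$e$e * (\<nu>$(src e) - \<nu>$(tgt e)) = 0" using we[of e] w0 by simp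
    ultimately show ?thesis by simp
  qed
  have constv: "\<nu>$j = \<nu>$k" for j k
  proof -
    have "(j, k) \<in> ({(src e, tgt e) | e. True} \<union> {(tgt e, src e) | e. True})\<^sup>*"
      using conn unfolding graph_connected_def by blast
    then show ?thesis
    proof (induction rule: rtrancl_induct)
      case base then show ?case by simp
    next
      case (step y z) then show ?case using edge by auto
    qed
  qed
  define c where "c = \<nu>$undefined"
  have "\<forall>i. \<nu>$i = c" using constv unfolding c_def by blast
  then have nuc: "\<nu> = c *\<^sub>R one_vec" unfolding one_vec_def
    by (simp add: vec_eq_iff)
  have omnu: "\<omega> = \<nu>"
  proof -
    have "L p q \<omega> \<theta> \<alpha> lam \<eta> \<nu> \<le> L p q \<nu> \<theta> \<alpha> lam \<eta> \<nu>" by (rule low)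
    then have "(1/2) * (\<omega> \<bullet> (D *v \<omega>)) - \<nu> \<bullet> (D *v \<omega>) \<le> (1/2) * (\<nu> \<bullet> (D *v \<nu>)) - \<nu> \<bullet> (D *v \<nu>)"
      unfolding Lexp by (simp add: inner_diff_right)
    moreover have "(\<omega> - \<nu>) \<bullet> (D *v (\<omega> - \<nu>)) = \<omega> \<bullet> (D *v \<omega>) - 2 * (\<nu> \<bullet> (D *v \<omega>)) + \<nu> \<bullet> (D *v \<nu>)"
      unfolding diag_quad[OF D_diag]
      by (simp add: sum_subtractf sum.distrib sum_distrib_left algebra_simps)
    ultimately have "(\<omega> - \<nu>) \<bullet> (D *v (\<omega> - \<nu>)) \<le> 0" by simp
    then show ?thesis using diag_zero[OF D_diag] by fastforce
  qed
  have "\<nu> \<bullet> g = 0" using g0 by simp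
  moreover have "\<nu> \<bullet> g = c * s - \<nu> \<bullet> (D *v \<nu>) - w \<bullet> \<theta>"
    unfolding g_def s_def w_def omnu by (simp add: inner_diff_right dot_lmul_matrix nuc right_diff_distrib)
  ultimately have "\<nu> \<bullet> (D *v \<nu>) = 0" using s0 w0 by simp
  then have nu0: "\<nu> = 0" using diag_zero[OF D_diag] by simp
  then have om0: "\<omega> = 0" using omnu by simp
  define r where "r = \<alpha> - lam *\<^sub>R one_vec + (\<eta> v* HTm)"
  have "L p q \<omega> \<theta> \<alpha> lam \<eta> \<nu> \<le> L p (q - r) \<omega> \<theta> \<alpha> lam \<eta> \<nu>" by (rule low)
  moreover have K: "\<alpha> \<bullet> (x - p) - lam * (one_vec \<bullet> (x - d)) + \<eta> \<bullet> (HTm *v (x - d) - F)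
      = r \<bullet> x - \<alpha> \<bullet> p + lam * (one_vec \<bullet> d) - \<eta> \<bullet> (HTm *v d) - \<eta> \<bullet> F" for x
  proof -
    have "r \<bullet> x = \<alpha> \<bullet> x - lam * (one_vec \<bullet> x) + \<eta> \<bullet> (HTm *v x)"
      unfolding r_def by (simp add: inner_add_left inner_diff_left dot_lmul_matrix)
    moreover have "\<eta> \<bullet> (HTm *v (x - d) - F) = \<eta> \<bullet> (HTm *v x) - \<eta> \<bullet> (HTm *v d) - \<eta> \<bullet> F"
      by (simp add: matrix_vector_mult_diff_distrib inner_diff_right)
    ultimately show ?thesis by (simp add: inner_diff_right right_diff_distrib)
  qed
  ultimately have "r \<bullet> q \<le> r \<bullet> (q - r)" using K[of q] K[of "q - r"] unfolding Lexp nu0 by (simp add: algebra_simps)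
  then have "r \<bullet> r \<le> 0" by (simp add: inner_diff_right)
  then have r0: "r = 0" by (rule inner_self_le0)
  then have alph: "\<alpha> = lam *\<^sub>R one_vec - (\<eta> v* HTm)" unfolding r_def by (simp add: algebra_simps)
  have dJ: "deriv (J j) (p$j) = \<alpha>$j" for j
  proof -
    define f where "f y = J j y - \<alpha>$j * y" for y
    have loc: "f (p$j) \<le> f y" for y
    proof -
      define p' where "p' = (\<chi> k. if k = j then y else p$k)"
      have "L p q \<omega> \<theta> \<alpha> lam \<eta> \<nu> \<le> L p' q \<omega> \<theta> \<alpha> lam \<eta> \<nu>" by (rule low)
      then have "Jsum J p - \<alpha> \<bullet> p \<le> Jsum J p' - \<alpha> \<bullet> p'"
        unfolding Lexp by (simp add: inner_diff_right)
      moreover have "Jsum J p' = Jsum J p - J j (p$j) + J j y"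
      proof -
        have "Jsum J p' = (\<Sum>k\<in>UNIV. J k (p$k) + (if k = j then J j y - J j (p$j) else 0))"
          unfolding Jsum_def p'_def by (rule sum.cong) auto
        then show ?thesis by (simp add: sum.distrib Jsum_def)
      qed
      moreover have "\<alpha> \<bullet> p' = \<alpha> \<bullet> p - \<alpha>$j * p$j + \<alpha>$j * y"
      proof -
        have "\<alpha> \<bullet> p' = (\<Sum>k\<in>UNIV. \<alpha>$k * p$k + (if k = j then \<alpha>$j * y - \<alpha>$j * p$j else 0))"
          unfolding inner_vec_def p'_def by (rule sum.cong) auto
        then show ?thesis by (simp add: sum.distrib inner_vec_def)
      qed
      ultimately show ?thesis unfolding f_def by simp
    qed
    have "DERIV (J j) (p$j) :> deriv (J j) (p$j)"
      using J_d1 DERIV_deriv_iff_real_differentiable by blast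
    then have "DERIV f (p$j) :> deriv (J j) (p$j) - \<alpha>$j"
      unfolding f_def by (auto intro!: derivative_eq_intros)
    then have "deriv (J j) (p$j) - \<alpha>$j = 0"
      by (rule DERIV_local_min[where d=1]) (use loc in auto)
    then show ?thesis by simp
  qed
  have grad: "gradJ J p = lam *\<^sub>R one_vec - Hmat C B *v \<eta>"
    unfolding gradJ_def Hmat_def HTm_def[symmetric]
    using dJ alph by (simp add: vec_eq_iff)
  have feas: "reduced_feasible C B d F q"
    unfolding reduced_feasible_def using s0 hle unfolding s_def h_def HTm_def by auto
  have ropt: "reduced_optimal J C B d F q"
    unfolding reduced_optimal_def
  proof (intro conjI allI impI feas)
    fix q' assume f': "reduced_feasible C B d F q'"
    have "L p q \<omega> \<theta> \<alpha> lam \<eta> \<nu> \<le> L q' q' 0 \<theta> \<alpha> lam \<eta> \<nu>" by (rule low)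
    moreover have "L p q \<omega> \<theta> \<alpha> lam \<eta> \<nu> = Jsum J q"
      unfolding Lexp using nu0 om0 qp s0 cs unfolding s_def h_def by simp
    moreover have "\<eta> \<bullet> (HTm *v (q' - d) - F) \<le> 0" unfolding inner_vec_def
      using eta0 f' unfolding reduced_feasible_def HTm_def
      by (auto intro!: sum_nonpos mult_nonneg_nonpos)
    moreover have "L q' q' 0 \<theta> \<alpha> lam \<eta> \<nu> = Jsum J q' + \<eta> \<bullet> (HTm *v (q' - d) - F)"
      unfolding Lexp using nu0 f' unfolding reduced_feasible_def by simp
    ultimately show "Jsum J q \<le> Jsum J q'" by simp
  qed
  show ?thesis unfolding C_def[symmetric] F_def[symmetric] using g0 om0 ropt grad unfolding g_def by blast
qed

end
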